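(* Let $k\ge4$, $\lambda>0$, $0<\theta<1$. Put $\theta_c(k)=\frac{k-1}{k+1}$, $\theta_c'(k)=\frac{k-1}{k}$, $\lambda_{\rm cr}'(k)=\frac{1}{k-1-k\theta}$ (for $\theta<\theta'_c(k)$) and $\lambda_{\rm cr}(k)=\frac{1}{k-1-(k+1)\theta}\bigl(\frac{k+1}{k}\bigr)^k$ (for $\theta<\theta_c(k)$). Then: (1) if $\theta\ge\theta'_c(k)$, or $\theta<\theta'_c(k)$ and $\lambda<\lambda'_{\rm cr}(k)$, there exists exactly one TISGM; (2) if $\theta<\theta_c(k)$ and $\lambda>\lambda_{\rm cr}(k)$, there exist at least three TISGMs.
   Context: SCWR model on the Cayley tree of order $k$ (each vertex has $k$ direct successors), spins in $\{-1,0,1\}$, activity $\lambda>0$, $\theta=e^{-J\beta}$; ferromagnetic means $0<\theta<1$. TISGMs are in one-to-one correspondence with the solutions $(x,y)\in(0,\infty)^2$ of $x=\lambda\bigl(\frac{1+x+\theta y}{1+x+y}\bigr)^k$, $y=\lambda\bigl(\frac{1+\theta x+y}{1+x+y}\bigr)^k$; the number of TISGMs is the number of such solutions. *)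

theory Defs
  imports Complex_Main
begin

text \<open>Positive solutions (x,y) of the SCWR fixed-point system on the Cayley tree of
order k; these are in one-to-one correspondence with the translation-invariant
splitting Gibbs measures (TISGMs).\<close>
definition scwr_tisgm_solutions :: "nat \<Rightarrow> real \<Rightarrow> real \<Rightarrow> (real \<times> real) set" where
  "scwr_tisgm_solutions k lam th =
     {(x, y). x > 0 \<and> y > 0 \<and>
        x = lam * ((1 + x + th * y) / (1 + x + y)) ^ k \<and>
        y = lam * ((1 + th * x + y) / (1 + x + y)) ^ k}"

definition theta_c :: "nat \<Rightarrow> real" where
  "theta_c k = (real k - 1) / (real k + 1)"

definition theta_c' :: "nat \<Rightarrow> real" where
  "theta_c' k = (real k - 1) / real k"

definition lambda_cr' :: "nat \<Rightarrow> real \<Rightarrow> real" where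
  "lambda_cr' k th = 1 / (real k - 1 - real k * th)"

definition lambda_cr :: "nat \<Rightarrow> real \<Rightarrow> real" where
  "lambda_cr k th = 1 / (real k - 1 - (real k + 1) * th) * ((real k + 1) / real k) ^ k"

end

theory Submission
  imports Defs
begin


lemma pair_ineq:
  fixes p q :: real assumes "0 \<le> p" "0 \<le> q"
  shows "p^i*q^j + q^i*p^j \<le> p^(i+j) + q^(i+j)"
proof -
  have "0 \<le> (p^i - q^i) * (p^j - q^j)"
  proof (cases "p \<le> q")
    case True
    then have "p^i \<le> q^i" "p^j \<le> q^j" using assms by (auto intro: power_mono)
    then show ?thesis by (simp add: mult_nonpos_nonpos)
  next
    case False
    then have "q^i \<le> p^i" "q^j \<le> p^j" using assms by (auto intro: power_mono)
    then show ?thesis by simp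
  qed
  then show ?thesis by (simp add: power_add algebra_simps)
qed

lemma sum_bound:
  fixes p q :: real assumes "0 \<le> p" "0 \<le> q"
  shows "2 * (\<Sum>i<n. q^(n - Suc i) * p^i) \<le> real n * (p^(n-1) + q^(n-1))"
proof -
  let ?f = "\<lambda>i. q^(n - Suc i) * p^i"
  have "(\<Sum>i<n. ?f i) = (\<Sum>i<n. ?f (n - Suc i))" by (rule sum.nat_diff_reindex[symmetric])
  then have "2 * (\<Sum>i<n. ?f i) = (\<Sum>i<n. ?f i + ?f (n - Suc i))" by (simp add: sum.distrib)
  also have "\<dots> \<le> (\<Sum>i<n. p^(n-1) + q^(n-1))"
  proof (rule sum_mono)
    fix i assume "i \<in> {..<n}"
    then have i: "i < n" by simp
    have "?f i + ?f (n - Suc i) = p^i * q^(n - Suc i) + q^i * p^(n - Suc i)"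
      using i by (simp add: Suc_diff_Suc algebra_simps)
    also have "\<dots> \<le> p^(i + (n - Suc i)) + q^(i + (n - Suc i))" by (rule pair_ineq[OF assms])
    also have "i + (n - Suc i) = n - 1" using i by simp
    finally show "?f i + ?f (n - Suc i) \<le> p^(n-1) + q^(n-1)" .
  qed
  also have "\<dots> = real n * (p^(n-1) + q^(n-1))" by simp
  finally show ?thesis .
qed



lemma pv_ineq:
  fixes p lam :: real and k :: nat
  assumes "0 < p" "p \<le> 1" "k \<ge> 2" "p \<ge> 1/2 \<or> lam \<le> 1" "lam > 0"
  shows "(1+lam)*p^(k-1) \<le> 1 + 2*lam*p^k"
proof -
  define u where "u = p^(k-1)"
  have "p^k = p^(Suc (k-1))" using assms(3) by simp
  then have pk: "p^k = p*u" unfolding u_def by simp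
  have u1: "u \<le> 1" "0 < u" unfolding u_def using assms by (auto simp: power_le_one)
  have "p^(k-1) \<le> p^1" using assms by (intro power_decreasing) auto
  then have up: "u \<le> p" unfolding u_def by simp
  have "(1+lam)*u \<le> 1 + 2*lam*(p*u)"
  proof (cases "p \<ge> 1/2")
    case True
    have "lam*u*(2*p-1) \<ge> 0" using True u1 assms by auto
    then show ?thesis using u1 by (simp add: algebra_simps)
  next
    case False
    then have "lam \<le> 1" using assms by auto
    have "lam*u \<le> u" using \<open>lam \<le> 1\<close> u1 by (simp add: mult_left_le_one_le)
    moreover have "lam*u*p \<ge> 0" using u1 assms by auto
    ultimately show ?thesis using up False by (simp add: algebra_simps)
  qed
  then show ?thesis using pk u_def by simp
qed

lemma forced_sym:
  fixes k :: nat and lam th x y :: real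
  assumes k: "k \<ge> 4" and lam: "lam > 0" and th: "0 < th" "th < 1"
    and c1: "lam * real k * (1 - th) < 1 + lam" and c2: "th \<ge> 1/2 \<or> lam \<le> 1"
    and xy: "x > 0" "y > 0"
    and ex: "x = lam * ((1 + x + th * y) / (1 + x + y)) ^ k"
    and ey: "y = lam * ((1 + th * x + y) / (1 + x + y)) ^ k"
  shows "x = y"
proof (rule ccontr)
  assume ne: "x \<noteq> y"
  define s where "s = 1 + x + y"
  define p where "p = (1 + x + th * y) / s"
  define q where "q = (1 + th * x + y) / s"
  have txy: "th*x < x" "th*y < y" "th*x > 0" "th*y > 0" using th xy by auto
  have s0: "s > 0" using xy s_def by simp
  have p0: "p > th" "p \<le> 1" "p > 0" using s0 th xy txy unfolding p_def s_def by (auto simp: field_simps)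
  have q0: "q > th" "q \<le> 1" "q > 0" using s0 th xy txy unfolding q_def s_def by (auto simp: field_simps)
  have xp: "x = lam * p^k" using ex p_def s_def by simp
  have yq: "y = lam * q^k" using ey q_def s_def by simp
  define S where "S = (\<Sum>i<k. q^(k - Suc i) * p^i)"
  have pq: "p - q = (1 - th) * (x - y) / s" unfolding p_def q_def using s0 by (simp add: field_simps)
  have "x - y = lam * (p^k - q^k)" using xp yq by (simp add: algebra_simps)
  also have "\<dots> = lam * (p - q) * S" unfolding S_def by (simp add: power_diff_sumr2)
  also have "\<dots> = (x - y) * (lam * (1 - th) * S / s)" using pq by simp
  finally have "(x - y) * 1 = (x - y) * (lam * (1 - th) * S / s)" by simp
  then have "lam * (1 - th) * S / s = 1" using ne by (metis mult_left_cancel right_minus_eq)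
  then have sS: "s = lam * (1 - th) * S" using s0 by (simp add: field_simps)
  have Sb: "2 * S \<le> real k * (p^(k-1) + q^(k-1))" unfolding S_def using sum_bound p0 q0 by auto
  have PQ: "p^(k-1) + q^(k-1) > 0" using p0 q0 by (simp add: add_pos_pos)
  have "2 * s = lam * (1 - th) * (2 * S)" using sS by simp
  also have "\<dots> \<le> lam * (1 - th) * (real k * (p^(k-1) + q^(k-1)))"
    using Sb lam th by (intro mult_left_mono) auto
  also have "\<dots> = (lam * real k * (1 - th)) * (p^(k-1) + q^(k-1))" by simp
  also have "\<dots> < (1 + lam) * (p^(k-1) + q^(k-1))"
    using c1 PQ by (intro mult_strict_right_mono) auto
  finally have A: "2 * s < (1 + lam) * p^(k-1) + (1 + lam) * q^(k-1)" by (simp add: algebra_simps)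
  have c2p: "p \<ge> 1/2 \<or> lam \<le> 1" "q \<ge> 1/2 \<or> lam \<le> 1" using c2 p0 q0 by auto
  have "(1+lam)*p^(k-1) \<le> 1 + 2*lam*p^k" by (rule pv_ineq) (use p0 k c2p lam in auto)
  moreover have "(1+lam)*q^(k-1) \<le> 1 + 2*lam*q^k" by (rule pv_ineq) (use q0 k c2p lam in auto)
  moreover have "2 * s = 1 + 2*lam*p^k + (1 + 2*lam*q^k)" using s_def xp yq by simp
  ultimately show False using A by linarith
qed



definition hh :: "real \<Rightarrow> real \<Rightarrow> real" where
  "hh th t = (1 + t + th * t) / (1 + t + t)"

lemma hh_pos: "0 < th \<Longrightarrow> 0 \<le> t \<Longrightarrow> 0 < hh th t"
  unfolding hh_def by (simp add: add_pos_nonneg)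

lemma hh_le1: "0 < th \<Longrightarrow> th < 1 \<Longrightarrow> 0 \<le> t \<Longrightarrow> hh th t \<le> 1"
  unfolding hh_def using mult_right_le_one_le[of t th] by (simp add: field_simps)

lemma hh_anti: assumes "0 < th" "th < 1" "0 \<le> a" "a \<le> b" shows "hh th b \<le> hh th a"
proof -
  have "(1 + b + th * b) * (1 + a + a) \<le> (1 + a + th * a) * (1 + b + b)"
  proof -
    have "(1-th)*a \<le> (1-th)*b" using assms by (intro mult_left_mono) auto
    then show ?thesis by (simp add: algebra_simps)
  qed
  moreover have "0 < 1 + a + a" "0 < 1 + b + b" using assms by auto
  ultimately show ?thesis unfolding hh_def by (simp add: divide_simps mult.commute)
qed

lemma sym_exists:
  assumes "lam > 0" "0 < th" "th < 1"
  shows "\<exists>t>0. t = lam * (hh th t)^k"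
proof -
  define f where "f t = t - lam * (hh th t)^k" for t
  have c: "continuous_on {0..lam} f" unfolding f_def hh_def
    by (intro continuous_intros) (auto simp: add_pos_nonneg)
  have "f 0 \<le> 0" unfolding f_def hh_def using assms by simp
  moreover have "0 \<le> f lam"
  proof -
    have "hh th lam ^ k \<le> 1" using hh_le1[of th lam] hh_pos[of th lam] assms
      by (simp add: power_le_one)
    then show ?thesis unfolding f_def using assms by (simp add: mult_left_le_one_le)
  qed
  ultimately obtain t where t: "0 \<le> t" "t \<le> lam" "f t = 0"
    using IVT'[of f 0 0 lam, OF _ _ _ c] assms by auto
  have "t \<noteq> 0" using t assms unfolding f_def hh_def by auto
  then show ?thesis using t unfolding f_def by (intro exI[of _ t]) auto
qed

lemma sym_unique:
  assumes "lam > 0" "0 < th" "th < 1" "0 < t1" "0 < t2"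
    "t1 = lam * (hh th t1)^k" "t2 = lam * (hh th t2)^k"
  shows "t1 = t2"
proof -
  have *: False if "0 < a" "a < b" "a = lam * (hh th a)^k" "b = lam * (hh th b)^k" for a b
  proof -
    have "hh th b \<le> hh th a" using hh_anti assms that by auto
    then have "(hh th b)^k \<le> (hh th a)^k" using hh_pos[of th b] assms that by (intro power_mono) auto
    then have "b \<le> a" using that assms by (metis mult_left_mono less_imp_le)
    then show False using that by simp
  qed
  show ?thesis using *[of t1 t2] *[of t2 t1] assms by (cases "t1 < t2"; cases "t2 < t1") auto
qed



lemma part2:
  fixes k :: nat and lam th :: real
  assumes k: "k \<ge> 4" and lam: "lam > 0" and th: "0 < th" "th < 1"
    and tc: "th < theta_c k" and lc: "lam > lambda_cr k th"
  shows "\<exists>A \<subseteq> scwr_tisgm_solutions k lam th. finite A \<and> card A = 3"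
proof -
  define c where "c = real k - 1 - (real k + 1) * th"
  have kpos: "real k > 0" using k by simp
  have c0: "c > 0" using tc kpos unfolding c_def theta_c_def by (simp add: field_simps)
  define ts where "ts = 1 / c"
  have ts0: "ts > 0" using c0 ts_def by simp
  have hts: "hh th ts = real k / (real k + 1)"
  proof -
    have a: "(1 + ts + th*ts)*c = c+1+th" "(1+ts+ts)*c = c+2" using c0 by (simp_all add: ts_def algebra_simps)
    have "hh th ts = ((1 + ts + th*ts)*c)/((1+ts+ts)*c)" unfolding hh_def using c0 by simp
    then have "hh th ts = (c + 1 + th)/(c + 2)" using a by simp
    moreover have "c+1+th = real k*(1-th)" "c+2 = (real k+1)*(1-th)" by (simp_all add: c_def algebra_simps)
    ultimately show ?thesis using th by simp
  qed
  have lcr: "lambda_cr k th * (real k / (real k + 1))^k = ts"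
  proof -
    have r: "((real k + 1)/real k)^k * (real k/(real k + 1))^k = 1"
      unfolding power_mult_distrib[symmetric] using kpos by simp
    have "lambda_cr k th = ts * ((real k + 1)/real k)^k" unfolding lambda_cr_def ts_def c_def by simp
    then show ?thesis using r by (metis mult.assoc mult.right_neutral)
  qed
  obtain t0 where t0: "t0 > 0" "t0 = lam * (hh th t0)^k" using sym_exists lam th by blast
  have t0ts: "t0 > ts"
  proof (rule ccontr)
    assume "\<not> t0 > ts"
    then have "t0 \<le> ts" by simp
    then have "hh th ts \<le> hh th t0" using hh_anti th t0 by auto
    then have "(hh th ts)^k \<le> (hh th t0)^k" using hh_pos[of th ts] th ts0 by (intro power_mono) auto
    then have "lam * (hh th ts)^k \<le> t0" using t0 lam by (metis mult_left_mono less_imp_le)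
    moreover have "lambda_cr k th * (hh th ts)^k < lam * (hh th ts)^k"
      using lc hh_pos[of th ts] th ts0 by (intro mult_strict_right_mono) auto
    ultimately have "ts < t0" using lcr hts by simp
    then show False using \<open>t0 \<le> ts\<close> by simp
  qed
  have t0c: "t0 * c > 1" using t0ts ts_def c0 by (simp add: field_simps)
  define p0 where "p0 = hh th t0"
  define s0 where "s0 = 1 + t0 + t0"
  have s0p: "s0 > 0" using t0 s0_def by simp
  have p0s: "p0 * s0 = 1 + t0 + th * t0" unfolding p0_def s0_def hh_def using t0 by simp
  have thx: "th * t0 < t0" "th * t0 > 0" using th t0 by auto
  have "th * s0 < p0 * s0" using p0s th t0 thx unfolding s0_def by (simp add: algebra_simps)
  then have p0a: "th < p0" using s0p by simp
  have "p0 * s0 < 1 * s0" using p0s thx unfolding s0_def by simp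
  then have "p0 < 1" using s0p by (meson mult_less_cancel_right_pos)
  note p0b = p0a this
  have "(1-p0)*(1+t0) - (p0-th)*t0 = (1+t0+th*t0) - p0*s0" by (simp add: s0_def algebra_simps)
  then have e1: "(1 - p0) * (1 + t0) = (p0 - th) * t0" using p0s by simp
  have lp0: "lam * p0^k = t0" using t0 p0_def by simp
  have p02: "2 * p0 > 1 + th"
  proof -
    have "(1 + th) * s0 < (2 * p0) * s0" using p0s s0_def th t0 by (simp add: algebra_simps)
    then show ?thesis using s0p by (meson mult_less_cancel_right_pos)
  qed
  define A where "A = lam * (real k * p0^(k-1))"
  define B where "B = (A*(1-p0) - s0)/(p0-th)"
  define X where "X = (\<lambda>p::real. lam * p^k)"
  define Y where "Y = (\<lambda>p::real. (1-p)*(1+lam*p^k)/(p-th))"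
  define Q where "Q = (\<lambda>p::real. (1 + th * X p + Y p)/(1 + X p + Y p))"
  define G where "G = (\<lambda>p::real. lam * (Q p)^k - Y p)"
  have Xp0: "X p0 = t0" using lp0 X_def by simp
  have Yp0: "Y p0 = t0" unfolding Y_def using lp0 e1 p0b by (simp add: field_simps)
  have Qp0: "Q p0 = p0" unfolding Q_def using Xp0 Yp0 p0s s0p unfolding s0_def by (simp add: field_simps)
  have Gp0: "G p0 = 0" unfolding G_def using Qp0 Yp0 lp0 by simp
  have dX: "(X has_real_derivative A) (at p0)" unfolding X_def A_def
    by (auto intro!: derivative_eq_intros)
  have dY: "(Y has_real_derivative B) (at p0)"
  proof -
    have "(Y has_real_derivative (((-1) * (1 + lam*p0^k) + (1-p0)*A) * (p0 - th) - (1-p0)*(1+lam*p0^k) * 1)/((p0-th)*(p0-th))) (at p0)"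
    proof -
      have dN: "((\<lambda>x. (1-x)*(1+lam*x^k)) has_real_derivative (-1)*(1+lam*p0^k) + (1-p0)*A) (at p0)"
        by (auto intro!: derivative_eq_intros simp: A_def algebra_simps)
      have dD: "((\<lambda>x. x - th) has_real_derivative 1) (at p0)" by (auto intro!: derivative_eq_intros)
      show ?thesis unfolding Y_def using DERIV_divide[OF dN dD] p0b by simp
    qed
    moreover have "(((-1) * (1 + lam*p0^k) + (1-p0)*A) * (p0 - th) - (1-p0)*(1+lam*p0^k) * 1)/((p0-th)*(p0-th)) = B"
    proof -
      have N: "(1-p0)*(1+lam*p0^k) = (p0-th)*t0" using lp0 e1 by simp
      have num: "((-1) * (1 + t0) + (1-p0)*A) * (p0 - th) - (p0-th)*t0 * 1 = (A*(1-p0) - s0)*(p0-th)"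
        by (simp add: s0_def algebra_simps)
      have "(((-1) * (1 + lam*p0^k) + (1-p0)*A) * (p0 - th) - (1-p0)*(1+lam*p0^k) * 1)/((p0-th)*(p0-th))
          = (((-1) * (1 + t0) + (1-p0)*A) * (p0 - th) - (p0-th)*t0 * 1)/((p0-th)*(p0-th))"
        using N lp0 by simp
      also have "\<dots> = ((A*(1-p0) - s0)*(p0-th))/((p0-th)*(p0-th))" using num by simp
      also have "\<dots> = B" using p0b by (simp add: B_def)
      finally show ?thesis .
    qed
    ultimately show ?thesis by simp
  qed
  define Qd where "Qd = (A*(th-p0) + B*(1-p0))/s0"
  have dQ: "(Q has_real_derivative Qd) (at p0)"
  proof -
    have "(Q has_real_derivative ((th*A + B)*(1 + X p0 + Y p0) - (1 + th*X p0 + Y p0)*(A + B))/((1 + X p0 + Y p0)*(1 + X p0 + Y p0))) (at p0)"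
    proof -
      have dN: "((\<lambda>z. 1 + th * X z + Y z) has_real_derivative 0 + th * A + B) (at p0)"
        by (intro DERIV_add DERIV_const DERIV_cmult dX dY)
      have dD: "((\<lambda>z. 1 + X z + Y z) has_real_derivative 0 + A + B) (at p0)"
        by (intro DERIV_add DERIV_const dX dY)
      have "1 + X p0 + Y p0 \<noteq> 0" using Xp0 Yp0 t0 by simp
      from DERIV_divide[OF dN dD this] show ?thesis unfolding Q_def by simp
    qed
    moreover have "((th*A + B)*(1 + X p0 + Y p0) - (1 + th*X p0 + Y p0)*(A + B))/((1 + X p0 + Y p0)*(1 + X p0 + Y p0)) = Qd"
    proof -
      have e: "1 + th * t0 + t0 = p0 * s0" "1 + t0 + t0 = s0" using p0s s0_def by (simp_all add: algebra_simps)
      have num: "(th*A + B)*s0 - (p0*s0)*(A + B) = s0 * (A*(th-p0) + B*(1-p0))" by (simp add: algebra_simps)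
      show ?thesis unfolding Xp0 Yp0 e num Qd_def using s0p by simp
    qed
    ultimately show ?thesis by simp
  qed
  have dG: "(G has_real_derivative (A * Qd - B)) (at p0)"
  proof -
    have "(G has_real_derivative (lam * (real k * (Qd * Q p0 ^ (k - Suc 0))) - B)) (at p0)"
      unfolding G_def by (intro DERIV_diff DERIV_cmult DERIV_power dQ dY) 
    moreover have "lam * (real k * (Qd * Q p0 ^ (k - Suc 0))) - B = A * Qd - B" unfolding Qp0 A_def by simp
    ultimately show ?thesis by simp
  qed
  have A0: "A > 0" unfolding A_def using lam kpos p0b th by simp
  have Ap0: "A * p0 = real k * t0"
  proof -
    have "p0^(k-1) * p0 = p0^k" using k by (metis Suc_diff_1 less_le_trans power_Suc2 zero_less_numeral numeral_le_iff le_numeral_extra(3) not_less_eq_eq)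
    then show ?thesis unfolding A_def using lp0 by (metis mult.assoc mult.left_commute)
  qed
  have pos1: "A*(1-th) - s0 > 0"
  proof -
    have "(A*(1-th) - s0) * p0 = real k * t0 * (1 - th) - p0 * s0" using Ap0 by (simp add: algebra_simps)
    also have "\<dots> = t0 * c - 1" unfolding p0s c_def by (simp add: algebra_simps)
    finally have "(A*(1-th) - s0) * p0 > 0" using t0c by simp
    then show ?thesis using p0b th by (simp add: zero_less_mult_iff)
  qed
  have neg1: "A*(1+th-2*p0) - s0 < 0"
  proof -
    have "A*(1+th-2*p0) < 0" using A0 p02 by (simp add: mult_pos_neg)
    then show ?thesis using s0p by simp
  qed
  define W where "W = A*(1-p0) - s0"
  have Dm: "(A * Qd - B) * (s0*(p0-th)) = (W - A*(p0-th)) * (W + A*(p0-th))"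
  proof -
    have Be: "B*(p0-th) = W" unfolding B_def W_def using p0b by simp
    have Qs: "Qd * s0 = A*(th-p0) + B*(1-p0)" unfolding Qd_def using s0p by simp
    have W2: "A*(1-p0) - s0 = W" by (simp add: W_def)
    have "(A*Qd - B)*(s0*(p0-th)) = A*(Qd*s0)*(p0-th) - (B*(p0-th))*s0" by (simp add: algebra_simps)
    also have "\<dots> = A*(A*(th-p0) + B*(1-p0))*(p0-th) - W*s0" using Qs Be by simp
    also have "\<dots> = 0 - (A*(p0-th))^2 + A*(1-p0)*(B*(p0-th)) - W*s0" by (simp add: algebra_simps power2_eq_square)
    also have "\<dots> = 0 - (A*(p0-th))^2 + W*(A*(1-p0) - s0)" using Be by (simp add: algebra_simps)
    also have "\<dots> = 0 - (A*(p0-th))^2 + W*W" using W2 by simp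
    also have "\<dots> = (W - A*(p0-th)) * (W + A*(p0-th))" by (simp add: algebra_simps power2_eq_square)
    finally show ?thesis .
  qed
  have "(W - A*(p0-th)) * (W + A*(p0-th)) < 0"
    using neg1 pos1 unfolding W_def by (intro mult_neg_pos) (simp_all add: algebra_simps)
  then have "(A * Qd - B) * (s0*(p0-th)) < 0" using Dm by simp
  moreover have "s0*(p0-th) > 0" using s0p p0b by simp
  ultimately have Dneg: "A * Qd - B < 0" using s0p p0b by (auto simp add: mult_less_0_iff)
  obtain d where d: "d > 0" "\<And>h. h > 0 \<Longrightarrow> h < d \<Longrightarrow> G p0 < G (p0 - h)"
    using DERIV_neg_dec_left[OF dG Dneg] by blast
  define p1 where "p1 = p0 - min (d/2) ((p0-th)/2)"
  define hm where "hm = min (d/2) ((p0-th)/2)"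
  have hm: "hm > 0" "hm < d" "hm \<le> (p0-th)/2" using d p0b unfolding hm_def by (auto simp: min_def)
  have p1b: "th < p1" "p1 < p0" "G p1 > 0" using d(2)[OF hm(1) hm(2)] hm Gp0 unfolding p1_def hm_def[symmetric] by auto
  have posXY: "X p > 0 \<and> Y p > 0" if "th < p" "p < 1" for p
    unfolding X_def Y_def using that lam th by (auto intro!: divide_pos_pos mult_pos_pos add_pos_nonneg)
  define dl where "dl = min ((p1-th)/2) ((1-th)/(2*(1+lam)))"
  have dl0: "dl > 0" "dl < p1 - th" "(1+lam)*dl \<le> (1-th)/2"
  proof -
    have a: "dl \<le> (p1-th)/2" "dl \<le> (1-th)/(2*(1+lam))" unfolding dl_def by (simp_all only: min.cobounded1 min.cobounded2)
    have "0 < (1-th)/(2*(1+lam))" using th lam by simp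
    then show "dl > 0" using p1b unfolding dl_def by simp
    show "dl < p1 - th" using a p1b by simp
    have "(1+lam)*dl \<le> (1+lam)*((1-th)/(2*(1+lam)))" using a lam by (intro mult_left_mono) auto
    also have "\<dots> = (1-th)/2" using lam by (simp add: field_simps)
    finally show "(1+lam)*dl \<le> (1-th)/2" .
  qed
  define p2 where "p2 = th + dl"
  have p2b: "th < p2" "p2 < p1" "p2 < 1" using dl0 p1b p0b unfolding p2_def by auto
  have Gp2: "G p2 < 0"
  proof -
    have xy: "X p2 > 0" "Y p2 > 0" using posXY p2b by auto
    have "Q p2 \<le> 1" unfolding Q_def using xy th by (simp add: field_simps mult_right_le_one_le less_imp_le)
    moreover have "Q p2 \<ge> 0" unfolding Q_def using xy th by simp
    ultimately have "(Q p2)^k \<le> 1" by (simp add: power_le_one)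
    then have "lam * (Q p2)^k \<le> lam" using lam by (simp add: mult_left_le_one_le)
    moreover have "Y p2 > lam"
    proof -
      have "(1-p2)*1 \<le> (1-p2)*(1+lam*p2^k)" using p2b lam th by (intro mult_left_mono) auto
      then have "(1-p2)/dl \<le> (1-p2)*(1+lam*p2^k)/dl" using dl0 by (intro divide_right_mono) auto
      moreover have "Y p2 = (1-p2)*(1+lam*p2^k)/dl" unfolding Y_def p2_def by simp
      ultimately have "(1-p2)/dl \<le> Y p2" by simp
      moreover have "lam * dl < 1 - p2" using dl0 th unfolding p2_def by (simp add: algebra_simps)
      then have "lam < (1-p2)/dl" using dl0 by (simp add: field_simps)
      ultimately show ?thesis by simp
    qed
    ultimately show ?thesis unfolding G_def by simp
  qed
  have cX: "isCont X p" for p unfolding X_def by (intro continuous_intros)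
  have cY: "isCont Y p" if "th < p" for p unfolding Y_def using that by (intro continuous_intros) auto
  have cQ: "isCont Q p" if "th < p" "p < 1" for p
  proof -
    have "1 + X p + Y p \<noteq> 0" using posXY that by (smt (verit))
    then show ?thesis unfolding Q_def using cX cY that by (intro continuous_intros) auto
  qed
  have cG: "continuous_on {p2..p1} G"
  proof (intro continuous_at_imp_continuous_on ballI)
    fix p assume "p \<in> {p2..p1}"
    then have "th < p" "p < 1" using p2b p1b p0b by auto
    then show "isCont G p" unfolding G_def using cQ cY by (intro continuous_intros) auto
  qed
  obtain p3 where p3: "p2 \<le> p3" "p3 \<le> p1" "G p3 = 0"
    using IVT'[of G p2 0 p1, OF _ _ _ cG] Gp2 p1b p2b by auto
  have p3b: "th < p3" "p3 < 1" "p3 < p0" using p3 p2b p1b p0b by auto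
  define x3 where "x3 = X p3"
  define y3 where "y3 = Y p3"
  have xy3: "x3 > 0" "y3 > 0" using posXY p3b unfolding x3_def y3_def by auto
  have rel: "1 + x3 + th * y3 = p3 * (1 + x3 + y3)"
  proof -
    have "y3 * (p3 - th) = (1-p3)*(1+x3)" unfolding y3_def x3_def Y_def X_def using p3b by simp
    then show ?thesis by (simp add: algebra_simps)
  qed
  have eqx: "x3 = lam * ((1 + x3 + th * y3) / (1 + x3 + y3))^k"
    using rel xy3 unfolding x3_def by (simp add: X_def)
  have eqy: "y3 = lam * ((1 + th * x3 + y3) / (1 + x3 + y3))^k"
    using p3 unfolding G_def Q_def x3_def y3_def by simp
  have ne: "x3 \<noteq> y3"
  proof
    assume h: "x3 = y3"
    have "x3 = lam * (hh th x3)^k" using eqx unfolding h hh_def by (simp add: algebra_simps)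
    then have "x3 = t0" using sym_unique[of lam th x3 t0 k] lam th xy3 t0 h by auto
    then have "p3^k = p0^k" using lp0 lam unfolding x3_def X_def by (metis mult_left_cancel less_irrefl)
    then have "p3 = p0" using p3b p0b th k by (intro power_eq_imp_eq_base[of p3 k p0]) auto
    then show False using p3b by simp
  qed
  have m1: "(t0, t0) \<in> scwr_tisgm_solutions k lam th"
    using t0 unfolding scwr_tisgm_solutions_def hh_def by (simp add: algebra_simps)
  have m2: "(x3, y3) \<in> scwr_tisgm_solutions k lam th"
    using eqx eqy xy3 unfolding scwr_tisgm_solutions_def by simp
  have m3: "(y3, x3) \<in> scwr_tisgm_solutions k lam th"
  proof -
    have r1: "(1 + y3 + th * x3) / (1 + y3 + x3) = (1 + th * x3 + y3) / (1 + x3 + y3)"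
      by (simp add: add_ac)
    have r2: "(1 + th * y3 + x3) / (1 + y3 + x3) = (1 + x3 + th * y3) / (1 + x3 + y3)"
      by (simp add: add_ac)
    show ?thesis unfolding scwr_tisgm_solutions_def mem_Collect_eq case_prod_conv r1 r2
      using eqx eqy xy3 by simp
  qed
  show ?thesis
    apply (rule exI[of _ "{(t0,t0),(x3,y3),(y3,x3)}"])
    using m1 m2 m3 ne by auto
qed


lemma part1:
  fixes k :: nat and lam th :: real
  assumes k: "k \<ge> 4" and lam: "lam > 0" and th: "0 < th" "th < 1"
    and cond: "th \<ge> theta_c' k \<or> (th < theta_c' k \<and> lam < lambda_cr' k th)"
  shows "card (scwr_tisgm_solutions k lam th) = 1"
proof -
  have kr: "real k \<ge> 4" using k by simp
  have cc: "lam * real k * (1 - th) < 1 + lam \<and> (th \<ge> 1/2 \<or> lam \<le> 1)"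
  proof (cases "th \<ge> theta_c' k")
    case True
    then have "real k - 1 \<le> real k * th" using kr unfolding theta_c'_def by (simp add: field_simps)
    then have "real k * (1 - th) \<le> 1" by (simp add: algebra_simps)
    then have "lam * (real k * (1 - th)) \<le> lam * 1" using lam by (intro mult_left_mono) auto
    moreover have "th \<ge> 1/2"
    proof -
      have "(real k - 1)/real k \<ge> 1/2" using kr by (simp add: field_simps)
      then show ?thesis using True unfolding theta_c'_def by linarith
    qed
    ultimately show ?thesis by (simp add: algebra_simps)
  next
    case False
    then have c2: "th < theta_c' k" "lam < lambda_cr' k th" using cond by auto
    have cpos: "real k - 1 - real k * th > 0" using c2(1) kr unfolding theta_c'_def by (simp add: field_simps)
    have "lam * (real k - 1 - real k * th) < 1" using c2(2) cpos unfolding lambda_cr'_def by (simp add: field_simps)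
    then have a: "lam * real k * (1 - th) < 1 + lam" by (simp add: algebra_simps)
    have "th \<ge> 1/2 \<or> lam \<le> 1"
    proof (cases "th \<ge> 1/2")
      case False
      then have "real k * th \<le> real k / 2" using kr by simp
      then have "real k - 1 - real k * th \<ge> 1" using kr by linarith
      then have "lam * 1 \<le> lam * (real k - 1 - real k * th)" using lam by (intro mult_left_mono) auto
      then show ?thesis using \<open>lam * (real k - 1 - real k * th) < 1\<close> by simp
    qed simp
    then show ?thesis using a by simp
  qed
  obtain t0 where t0: "t0 > 0" "t0 = lam * (hh th t0)^k" using sym_exists lam th by blast
  have "scwr_tisgm_solutions k lam th = {(t0, t0)}"
  proof
    show "{(t0, t0)} \<subseteq> scwr_tisgm_solutions k lam th"
      using t0 unfolding scwr_tisgm_solutions_def hh_def by (simp add: algebra_simps)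
    show "scwr_tisgm_solutions k lam th \<subseteq> {(t0, t0)}"
    proof
      fix z assume z: "z \<in> scwr_tisgm_solutions k lam th"
      obtain x y where zxy: "z = (x, y)" by (cases z)
      have xy: "x > 0" "y > 0" "x = lam * ((1 + x + th * y) / (1 + x + y)) ^ k"
        "y = lam * ((1 + th * x + y) / (1 + x + y)) ^ k"
        using z zxy unfolding scwr_tisgm_solutions_def by auto
      have "x = y" using forced_sym[OF k lam th] cc xy by blast
      then have "x = lam * (hh th x)^k" using xy unfolding hh_def by (simp add: algebra_simps)
      then have "x = t0" using sym_unique[of lam th x t0 k] lam th xy t0 by auto
      then show "z \<in> {(t0, t0)}" using zxy \<open>x = y\<close> by simp
    qed
  qed
  then show ?thesis by simp
qed

theorem mainTheorem11:
  fixes k :: nat and lam th :: real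
  assumes "k \<ge> 4" and "lam > 0" and "0 < th" and "th < 1"
  shows "((th \<ge> theta_c' k \<or> (th < theta_c' k \<and> lam < lambda_cr' k th))
           \<longrightarrow> card (scwr_tisgm_solutions k lam th) = 1)
         \<and> ((th < theta_c k \<and> lam > lambda_cr k th)
           \<longrightarrow> (\<exists>A \<subseteq> scwr_tisgm_solutions k lam th. finite A \<and> card A = 3))"
  using part1[OF assms] part2[OF assms] by blast

end
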